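(* Let $A\in\mathbb{R}_+^{n\times n}$ be a circulant matrix. Then $\mathrm{Attr}(A)=\{x\in\mathbb{R}_+^n:\ \lambda(A)\,A^{n^2}\otimes x=A^{n^2+1}\otimes x\}$.
   Context: Max algebra on $\mathbb{R}_+$: $\oplus=\max$, ordinary product, $(A\otimes x)_i=\max_jA_{i,j}x_j$, $A^t$ max-algebraic power. $\lambda(A)$ is the greatest max-algebraic eigenvalue (maximum cycle geometric mean). $V(A,\lambda)=\{x: A\otimes x=\lambda x\}$ and $\mathrm{Attr}(A)=\{x\in\mathbb{R}_+^n:\ A^t\otimes x\in V(A,\lambda(A))\text{ for some }t\ge0\}$. $A$ is circulant if $A_{i,j}=a_t$ with $t\equiv j-i\pmod n$, $t\in\{0,\dots,n-1\}$, for some $a_0,\dots,a_{n-1}\ge0$. *)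

theory Defs
  imports Complex_Main
begin

text \<open>An n x n matrix is a function
  nat \<Rightarrow> nat \<Rightarrow> real used on indices below n; a vector is nat \<Rightarrow> real
  used on indices below n (0-based indexing).\<close>

definition nonneg_mat :: "nat \<Rightarrow> (nat \<Rightarrow> nat \<Rightarrow> real) \<Rightarrow> bool" where
  "nonneg_mat n A \<longleftrightarrow> (\<forall>i<n. \<forall>j<n. 0 \<le> A i j)"

definition nonneg_vecs :: "nat \<Rightarrow> (nat \<Rightarrow> real) set" where
  "nonneg_vecs n = {x. \<forall>i<n. 0 \<le> x i}"

definition mvec :: "nat \<Rightarrow> (nat \<Rightarrow> nat \<Rightarrow> real) \<Rightarrow> (nat \<Rightarrow> real) \<Rightarrow> nat \<Rightarrow> real" where
  "mvec n A x i = Max {A i j * x j | j. j < n}"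

definition mmult :: "nat \<Rightarrow> (nat \<Rightarrow> nat \<Rightarrow> real) \<Rightarrow> (nat \<Rightarrow> nat \<Rightarrow> real) \<Rightarrow> nat \<Rightarrow> nat \<Rightarrow> real" where
  "mmult n A B i j = Max {A i k * B k j | k. k < n}"

definition mid :: "nat \<Rightarrow> nat \<Rightarrow> real" where
  "mid i j = (if i = j then 1 else 0)"

primrec mpow :: "nat \<Rightarrow> (nat \<Rightarrow> nat \<Rightarrow> real) \<Rightarrow> nat \<Rightarrow> nat \<Rightarrow> nat \<Rightarrow> real" where
  "mpow n A 0 = mid"
| "mpow n A (Suc t) = mmult n A (mpow n A t)"

definition cyc_gm :: "(nat \<Rightarrow> nat \<Rightarrow> real) \<Rightarrow> nat list \<Rightarrow> real" where
  "cyc_gm A c = root (length c)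
     (\<Prod>l<length c. A (c ! l) (c ! ((l + 1) mod length c)))"

definition mlambda :: "nat \<Rightarrow> (nat \<Rightarrow> nat \<Rightarrow> real) \<Rightarrow> real" where
  "mlambda n A = Max {cyc_gm A c | c. 1 \<le> length c \<and> length c \<le> n \<and> (\<forall>v\<in>set c. v < n)}"

definition eigencone :: "nat \<Rightarrow> (nat \<Rightarrow> nat \<Rightarrow> real) \<Rightarrow> real \<Rightarrow> (nat \<Rightarrow> real) set" where
  "eigencone n A lam = {x \<in> nonneg_vecs n. \<forall>i<n. mvec n A x i = lam * x i}"

definition Attr :: "nat \<Rightarrow> (nat \<Rightarrow> nat \<Rightarrow> real) \<Rightarrow> (nat \<Rightarrow> real) set" where
  "Attr n A = {x \<in> nonneg_vecs n. \<exists>t. mvec n (mpow n A t) x \<in> eigencone n A (mlambda n A)}"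

definition circulant :: "nat \<Rightarrow> (nat \<Rightarrow> nat \<Rightarrow> real) \<Rightarrow> bool" where
  "circulant n A \<longleftrightarrow> (\<exists>a::nat \<Rightarrow> real. \<forall>i<n. \<forall>j<n. A i j = a ((j + n - i) mod n))"

end

theory Submission
  imports Defs "HOL-Library.Multiset"
begin

lemma pig: assumes "set_mset m \<subseteq> {..<n}" "n*(n-1) < size m" shows "\<exists>v<n. n \<le> count m v"
proof (rule ccontr)
  assume "\<not> ?thesis"
  then have c: "\<And>v. v < n \<Longrightarrow> count m v \<le> n - 1" by force
  have "size m = (\<Sum>x\<in>set_mset m. count m x)" by (simp add: size_multiset_overloaded_eq)
  also have "\<dots> \<le> (\<Sum>x\<in>{..<n}. count m x)" by (rule sum_mono2) (use assms in auto)
  also have "\<dots> \<le> (\<Sum>x\<in>{..<n}. n - 1)" by (rule sum_mono) (use c in auto)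
  also have "\<dots> = n * (n-1)" by simp
  finally show False using assms by simp
qed

lemma modl: "i<(n::nat) \<Longrightarrow> s<n \<Longrightarrow> ((i+s) mod n + n - i) mod n = s"
  by (cases "i+s<n") (auto simp: mod_if)

lemma modl2: assumes "i<(n::nat)" shows "(i + (l + n - i) mod n + S) mod n = (l + S) mod n"
proof -
  have "(i + (l + n - i) mod n) mod n = (i + (l+n-i)) mod n" by (simp add: mod_add_right_eq)
  also have "i + (l+n-i) = l + n" using assms by simp
  finally have "(i + (l + n - i) mod n) mod n = l mod n" by simp
  then show ?thesis by (metis mod_add_left_eq)
qed

lemma Max_fin_props:
  fixes f :: "nat \<Rightarrow> real"
  assumes "1 \<le> n"
  shows "finite {f l | l. l < n}" "{f l | l. l < n} \<noteq> {}"
proof -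
  have "{f l | l. l < n} = f ` {..<n}" by auto
  then show "finite {f l | l. l < n}" by simp
  show "{f l | l. l < n} \<noteq> {}" using assms by (auto intro!: exI[of _ 0])
qed

lemma Max_ub: fixes f :: "nat \<Rightarrow> real" assumes "l < n" shows "f l \<le> Max {f l | l. l < n}"
proof -
  have "1 \<le> n" using assms by simp
  then show ?thesis using assms Max_fin_props[of n f] by (intro Max_ge) auto
qed

lemma Max_attained: fixes f :: "nat \<Rightarrow> real" assumes "1 \<le> n"
  shows "\<exists>l<n. Max {f l | l. l < n} = f l"
proof -
  have "Max {f l | l. l < n} \<in> {f l | l. l < n}" by (rule Max_in[OF Max_fin_props[OF assms]])
  then show ?thesis by blast
qed

lemma Max_lub: fixes f :: "nat \<Rightarrow> real" assumes "1 \<le> n" "\<And>l. l < n \<Longrightarrow> f l \<le> c"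
  shows "Max {f l | l. l < n} \<le> c"
  using Max_fin_props[OF assms(1), of f] assms(2) by (subst Max_le_iff) auto

lemma Max_cong': assumes "\<And>l. l < n \<Longrightarrow> f l = g l"
  shows "Max {f l | l. l < n} = Max {g l | l. l < n}"
proof -
  have "{f l | l. l < n} = {g l | l. l < n}" using assms by force
  then show ?thesis by simp
qed

lemma Max_scale: fixes f :: "nat \<Rightarrow> real" assumes "1 \<le> n" "0 \<le> c"
  shows "Max {c * f l | l. l < n} = c * Max {f l | l. l < n}"
proof (rule antisym)
  show "Max {c * f l | l. l < n} \<le> c * Max {f l | l. l < n}"
    by (rule Max_lub[OF assms(1)]) (use assms(2) Max_ub in \<open>auto intro: mult_left_mono\<close>)
  obtain l0 where "l0 < n" "Max {f l | l. l < n} = f l0" using Max_attained[OF assms(1), of f] by blast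
  then show "c * Max {f l | l. l < n} \<le> Max {c * f l | l. l < n}"
    using Max_ub[of l0 n "\<lambda>l. c * f l"] by simp
qed

lemma mpow_nonneg: "nonneg_mat n A \<Longrightarrow> i<n \<Longrightarrow> j<n \<Longrightarrow> 0 \<le> mpow n A t i j"
proof (induction t arbitrary: i j)
  case 0 then show ?case by (simp add: mid_def)
next
  case (Suc t)
  have "0 \<le> A i 0 * mpow n A t 0 j" using Suc by (auto simp: nonneg_mat_def)
  also have "\<dots> \<le> Max {A i k * mpow n A t k j | k. k < n}" using Max_ub[of 0 n] Suc by auto
  finally show ?case by (simp add: mmult_def)
qed

lemma mvec_nonneg: assumes "\<And>j. j < n \<Longrightarrow> 0 \<le> P i j" "\<And>j. j<n \<Longrightarrow> 0 \<le> x j" "i < n"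
  shows "0 \<le> mvec n P x i"
proof -
  have "0 \<le> P i 0 * x 0" using assms by auto
  also have "\<dots> \<le> Max {P i j * x j | j. j < n}" using Max_ub[of 0 n] assms by auto
  finally show ?thesis by (simp add: mvec_def)
qed

lemma mvec_Suc:
  assumes nn: "nonneg_mat n A" and x: "\<And>j. j<n \<Longrightarrow> 0 \<le> x j" and i: "i < n"
  shows "mvec n (mpow n A (Suc t)) x i = mvec n A (mvec n (mpow n A t) x) i"
proof -
  define P where "P = mpow n A t"
  have n1: "1 \<le> n" using i by simp
  have L: "mvec n (mpow n A (Suc t)) x i = Max {Max {A i k * P k j | k. k < n} * x j | j. j < n}"
    by (simp add: mvec_def mmult_def P_def)
  have R: "mvec n A (mvec n (mpow n A t) x) i = Max {A i k * Max {P k j * x j | j. j < n} | k. k < n}"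
    by (simp add: mvec_def P_def)
  have "Max {Max {A i k * P k j | k. k < n} * x j | j. j < n}
      = Max {A i k * Max {P k j * x j | j. j < n} | k. k < n}"
  proof (rule antisym)
    show "Max {Max {A i k * P k j | k. k < n} * x j | j. j < n}
      \<le> Max {A i k * Max {P k j * x j | j. j < n} | k. k < n}"
    proof (rule Max_lub[OF n1])
      fix j assume j: "j < n"
      obtain k0 where k0: "k0 < n" "Max {A i k * P k j | k. k < n} = A i k0 * P k0 j"
        using Max_attained[OF n1, of "\<lambda>k. A i k * P k j"] by blast
      have "A i k0 * P k0 j * x j = A i k0 * (P k0 j * x j)" by simp
      also have "\<dots> \<le> A i k0 * Max {P k0 j * x j | j. j < n}"
        using nn i k0 Max_ub[OF j, of "\<lambda>j. P k0 j * x j"] by (auto simp: nonneg_mat_def intro: mult_left_mono)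
      also have "\<dots> \<le> Max {A i k * Max {P k j * x j | j. j < n} | k. k < n}"
        using Max_ub[OF k0(1), of "\<lambda>k. A i k * Max {P k j * x j | j. j < n}"] by simp
      finally show "Max {A i k * P k j | k. k < n} * x j \<le> Max {A i k * Max {P k j * x j | j. j < n} | k. k < n}"
        using k0 by simp
    qed
    show "Max {A i k * Max {P k j * x j | j. j < n} | k. k < n}
      \<le> Max {Max {A i k * P k j | k. k < n} * x j | j. j < n}"
    proof (rule Max_lub[OF n1])
      fix k assume k: "k < n"
      obtain j0 where j0: "j0 < n" "Max {P k j * x j | j. j < n} = P k j0 * x j0"
        using Max_attained[OF n1, of "\<lambda>j. P k j * x j"] by blast
      have "A i k * (P k j0 * x j0) = (A i k * P k j0) * x j0" by simp
      also have "\<dots> \<le> Max {A i k * P k j0 | k. k < n} * x j0"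
        using x j0 Max_ub[OF k, of "\<lambda>k. A i k * P k j0"] by (auto intro: mult_right_mono)
      also have "\<dots> \<le> Max {Max {A i k * P k j | k. k < n} * x j | j. j < n}"
        using Max_ub[OF j0(1), of "\<lambda>j. Max {A i k * P k j | k. k < n} * x j"] by simp
      finally show "A i k * Max {P k j * x j | j. j < n} \<le> Max {Max {A i k * P k j | k. k < n} * x j | j. j < n}"
        using j0 by simp
    qed
  qed
  then show ?thesis using L R by simp
qed

lemma prodm_nonneg: "(\<forall>x\<in>#m. 0 \<le> (f x::real)) \<Longrightarrow> 0 \<le> prod_mset (image_mset f m)"
  by (induction m) auto

lemma walk_le:
  assumes nn: "nonneg_mat n A" and ca: "\<forall>i<n. \<forall>j<n. A i j = a ((j + n - i) mod n)"
  shows "size m = k \<Longrightarrow> set_mset m \<subseteq> {..<n} \<Longrightarrow> i < n \<Longrightarrow>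
    prod_mset (image_mset a m) \<le> mpow n A k i ((i + sum_mset m) mod n)"
proof (induction k arbitrary: m i)
  case 0 then have "m = {#}" by simp
  then show ?case using 0 by (simp add: mid_def)
next
  case (Suc k)
  then obtain s m0 where m: "m = add_mset s m0" by (metis size_eq_Suc_imp_eq_union)
  have s: "s < n" and m0: "set_mset m0 \<subseteq> {..<n}" "size m0 = k" using Suc.prems m by auto
  define l where "l = (i + s) mod n"
  have l: "l < n" using Suc.prems by (simp add: l_def)
  have as: "A i l = a s" using ca Suc.prems s l modl[of i n s] by (simp add: l_def)
  have as0: "0 \<le> a s" using nn as Suc.prems l unfolding nonneg_mat_def by metis
  define J where "J = (i + sum_mset m) mod n"
  have J: "(l + sum_mset m0) mod n = J" unfolding J_def l_def m
    by (simp add: mod_add_left_eq add.assoc)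
  have IH: "prod_mset (image_mset a m0) \<le> mpow n A k l J" using Suc.IH[OF m0(2) m0(1) l] J by simp
  have "prod_mset (image_mset a m) = a s * prod_mset (image_mset a m0)" by (simp add: m)
  also have "\<dots> \<le> A i l * mpow n A k l J" using as as0 IH by (simp add: mult_left_mono)
  also have "\<dots> \<le> Max {A i k' * mpow n A k k' J | k'. k' < n}"
    using Max_ub[OF l, of "\<lambda>k'. A i k' * mpow n A k k' J"] by simp
  finally show ?case by (simp add: mmult_def J_def)
qed

lemma walk_ex:
  assumes nn: "nonneg_mat n A" and ca: "\<forall>i<n. \<forall>j<n. A i j = a ((j + n - i) mod n)"
  shows "i < n \<Longrightarrow> j < n \<Longrightarrow> mpow n A k i j = 0 \<or> (\<exists>m. size m = k \<and> set_mset m \<subseteq> {..<n}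
     \<and> (i + sum_mset m) mod n = j \<and> prod_mset (image_mset a m) = mpow n A k i j)"
proof (induction k arbitrary: i j)
  case 0
  show ?case
  proof (cases "i = j")
    case True then show ?thesis using 0 by (intro disjI2 exI[of _ "{#}"]) (simp add: mid_def)
  next
    case False then show ?thesis by (simp add: mid_def)
  qed
next
  case (Suc k)
  have n1: "1 \<le> n" using Suc by simp
  obtain l where l: "l < n" "Max {A i k' * mpow n A k k' j | k'. k' < n} = A i l * mpow n A k l j"
    using Max_attained[OF n1, of "\<lambda>k'. A i k' * mpow n A k k' j"] by blast
  have v: "mpow n A (Suc k) i j = A i l * mpow n A k l j" using l by (simp add: mmult_def)
  from Suc.IH[OF l(1) Suc.prems(2)] show ?case
  proof
    assume "mpow n A k l j = 0" then show ?thesis using v by simp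
  next
    assume "\<exists>m. size m = k \<and> set_mset m \<subseteq> {..<n} \<and> (l + sum_mset m) mod n = j
      \<and> prod_mset (image_mset a m) = mpow n A k l j"
    then obtain m0 where m0: "size m0 = k" "set_mset m0 \<subseteq> {..<n}" "(l + sum_mset m0) mod n = j"
      "prod_mset (image_mset a m0) = mpow n A k l j" by blast
    define s where "s = (l + n - i) mod n"
    have s: "s < n" using n1 by (simp add: s_def)
    have as: "A i l = a s" using ca Suc.prems l by (simp add: s_def)
    have "(i + sum_mset (add_mset s m0)) mod n = (i + s + sum_mset m0) mod n" by (simp add: add.assoc)
    also have "\<dots> = j" using modl2[OF Suc.prems(1), of l "sum_mset m0"] m0(3) by (simp add: s_def)
    finally have "(i + sum_mset (add_mset s m0)) mod n = j" .
    then show ?thesis using m0 s as v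
      by (intro disjI2 exI[of _ "add_mset s m0"]) auto
  qed
qed

lemma core:
  assumes n1: "1 \<le> n" and nn: "nonneg_mat n A" and ca: "\<forall>i<n. \<forall>j<n. A i j = a ((j + n - i) mod n)"
    and l0: "l0 < n" "\<forall>l<n. a l \<le> a l0" and anz: "\<forall>l<n. 0 \<le> a l"
    and k: "n*(n-1) < k + n" and i: "i < n" and j: "j < n"
  shows "mpow n A (k+n) i j = (a l0)^n * mpow n A k i j"
proof (rule antisym)
  have M0: "0 \<le> a l0" using anz l0 by auto
  show "mpow n A (k+n) i j \<le> (a l0)^n * mpow n A k i j"
  proof (cases "mpow n A (k+n) i j = 0")
    case True then show ?thesis using mpow_nonneg[OF nn i j] M0 by simp
  next
    case False
    then obtain m where m: "size m = k+n" "set_mset m \<subseteq> {..<n}" "(i + sum_mset m) mod n = j"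
      "prod_mset (image_mset a m) = mpow n A (k+n) i j"
      using walk_ex[OF nn ca i j, of "k+n"] by blast
    obtain v where v: "v < n" "n \<le> count m v" using pig[OF m(2)] m(1) k by auto
    define R where "R = replicate_mset n v"
    have "R \<subseteq># m" unfolding R_def using v by (simp add: mset_subset_eqI count_replicate_mset)
    then have mR: "m = R + (m - R)" by (simp add: subset_mset.add_diff_inverse)
    define m' where "m' = m - R"
    have RR: "R \<subseteq># m" by fact
    have mR': "m = R + m'" using mR unfolding m'_def .
    have sm': "size m' = k" using RR m(1) by (simp add: m'_def R_def size_Diff_submset)
    have set': "set_mset m' \<subseteq> {..<n}" using m(2) by (auto simp: m'_def dest: in_diffD)
    have "(i + (n*v + sum_mset m')) mod n = (n*v + (i + sum_mset m')) mod n"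
      by (simp only: add.left_commute)
    also have "\<dots> = (i + sum_mset m') mod n" by simp
    finally have "(i + sum_mset m') mod n = (i + (n*v + sum_mset m')) mod n" by simp
    also have "\<dots> = (i + sum_mset m) mod n" by (subst mR') (simp add: R_def)
    finally have js: "(i + sum_mset m') mod n = j" using m(3) by simp
    have pw: "prod_mset (image_mset a m') \<le> mpow n A k i j" using walk_le[OF nn ca sm' set' i] js by simp
    have pn: "0 \<le> prod_mset (image_mset a m')"
      using set' anz by (intro prodm_nonneg) auto
    have "mpow n A (k+n) i j = (a v)^n * prod_mset (image_mset a m')"
      using m(4) by (subst (asm) mR') (simp add: R_def)
    also have "\<dots> \<le> (a l0)^n * mpow n A k i j"
      using pw pn v l0 anz by (intro mult_mono power_mono) auto
    finally show ?thesis .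
  qed
  show "(a l0)^n * mpow n A k i j \<le> mpow n A (k+n) i j"
  proof (cases "mpow n A k i j = 0")
    case True then show ?thesis using mpow_nonneg[OF nn i j] by simp
  next
    case False
    then obtain m where m: "size m = k" "set_mset m \<subseteq> {..<n}" "(i + sum_mset m) mod n = j"
      "prod_mset (image_mset a m) = mpow n A k i j"
      using walk_ex[OF nn ca i j, of k] by blast
    define m2 where "m2 = m + replicate_mset n l0"
    have s2: "size m2 = k + n" by (simp add: m2_def m(1))
    have set2: "set_mset m2 \<subseteq> {..<n}" using m(2) l0 by (auto simp: m2_def)
    have "(i + sum_mset m2) mod n = (i + sum_mset m + n * l0) mod n" by (simp add: m2_def add.assoc)
    also have "\<dots> = j" using m(3) by simp
    finally have "(i + sum_mset m2) mod n = j" .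
    then have "prod_mset (image_mset a m2) \<le> mpow n A (k+n) i j" using walk_le[OF nn ca s2 set2 i] by simp
    moreover have "prod_mset (image_mset a m2) = (a l0)^n * mpow n A k i j"
      using m(4) by (simp add: m2_def)
    ultimately show ?thesis by simp
  qed
qed


lemma mlambda_nonneg: assumes "1 \<le> n" "nonneg_mat n A" shows "0 \<le> mlambda n A"
proof -
  let ?S = "{cyc_gm A c | c. 1 \<le> length c \<and> length c \<le> n \<and> (\<forall>v\<in>set c. v < n)}"
  have "?S \<subseteq> cyc_gm A ` {c. set c \<subseteq> {..<n} \<and> length c \<le> n}" by auto
  moreover have "finite {c. set c \<subseteq> {..<n} \<and> length c \<le> n}"
    by (rule finite_lists_length_le) simp
  ultimately have fin: "finite ?S" by (meson finite_imageI finite_subset)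
  have mem: "cyc_gm A [0] \<in> ?S" using assms(1) by (auto intro!: exI[of _ "[0]"])
  have eq: "cyc_gm A [0] = A 0 0" by (simp add: cyc_gm_def)
  have "0 \<le> A 0 0" using assms by (auto simp: nonneg_mat_def)
  moreover have "cyc_gm A [0] \<le> Max ?S" by (rule Max_ge[OF fin mem])
  ultimately show ?thesis unfolding mlambda_def using eq by linarith
qed

lemma mvec_scale_vec: assumes "1 \<le> n" "0 \<le> c" "\<And>j. j < n \<Longrightarrow> z j = c * w j"
  shows "mvec n A z i = c * mvec n A w i"
proof -
  have "mvec n A z i = Max {c * (A i j * w j) | j. j < n}"
    unfolding mvec_def by (rule Max_cong') (simp add: assms(3))
  also have "\<dots> = c * mvec n A w i" unfolding mvec_def by (rule Max_scale[OF assms(1,2)])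
  finally show ?thesis .
qed

theorem proposition3:
  fixes n :: nat and A :: "nat \<Rightarrow> nat \<Rightarrow> real"
  assumes "1 \<le> n"
    and "nonneg_mat n A"
    and "circulant n A"
  shows "Attr n A = {x \<in> nonneg_vecs n.
           \<forall>i<n. mlambda n A * mvec n (mpow n A (n^2)) x i = mvec n (mpow n A (n^2 + 1)) x i}"
proof -
  note n1 = assms(1) and nn = assms(2)
  obtain a where ca: "\<forall>i<n. \<forall>j<n. A i j = a ((j + n - i) mod n)"
    using assms(3) unfolding circulant_def by blast
  have aA: "a l = A 0 l" if "l < n" for l using ca that n1 by simp
  have anz: "\<forall>l<n. 0 \<le> a l" using aA nn by (auto simp: nonneg_mat_def)
  obtain l0 where l0: "l0 < n" "Max {a l | l. l < n} = a l0" using Max_attained[OF n1, of a] by blast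
  have l0m: "\<forall>l<n. a l \<le> a l0" using l0 Max_ub[of _ n a] by metis
  define M where "M = a l0"
  have M0: "0 \<le> M" using anz l0 by (simp add: M_def)
  define lam where "lam = mlambda n A"
  have lam0: "0 \<le> lam" unfolding lam_def by (rule mlambda_nonneg[OF n1 nn])
  have Pnn: "\<And>t i j. i < n \<Longrightarrow> j < n \<Longrightarrow> 0 \<le> mpow n A t i j" using mpow_nonneg[OF nn] by blast
  show ?thesis
  proof (rule set_eqI, rule iffI)
    fix x assume xA: "x \<in> Attr n A"
    then have xn: "\<And>j. j < n \<Longrightarrow> 0 \<le> x j" by (auto simp: Attr_def nonneg_vecs_def)
    define y where "y t = mvec n (mpow n A t) x" for t
    have ySuc: "\<And>t i. i < n \<Longrightarrow> y (Suc t) i = mvec n A (y t) i"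
      unfolding y_def by (rule mvec_Suc[where x=x, OF nn xn])
    have ynn: "\<And>t j. j < n \<Longrightarrow> 0 \<le> y t j" unfolding y_def using Pnn xn by (intro mvec_nonneg) auto
    define E where "E t \<longleftrightarrow> (\<forall>i<n. y (Suc t) i = lam * y t i)" for t
    obtain t where "mvec n (mpow n A t) x \<in> eigencone n A (mlambda n A)" using xA by (auto simp: Attr_def)
    then have Et: "E t" by (auto simp: eigencone_def E_def ySuc lam_def y_def[symmetric])
    have Einv: "E t \<Longrightarrow> E (Suc t)" for t
    proof -
      assume Et: "E t"
      show "E (Suc t)" unfolding E_def
      proof (intro allI impI)
        fix i assume i: "i < n"
        have "y (Suc (Suc t)) i = mvec n A (y (Suc t)) i" using ySuc i by blast
        also have "\<dots> = lam * mvec n A (y t) i"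
          using Et by (intro mvec_scale_vec[OF n1 lam0]) (auto simp: E_def)
        also have "\<dots> = lam * y (Suc t) i" using ySuc i by simp
        finally show "y (Suc (Suc t)) i = lam * y (Suc t) i" .
      qed
    qed
    have Eadd: "E (t + d)" for d by (induction d) (use Et Einv in auto)
    have goal: "\<forall>i<n. lam * y (n^2) i = y (Suc (n^2)) i"
    proof (cases "M = 0")
      case True
      have A0: "A i j = 0" if "i < n" "j < n" for i j
      proof -
        have "A i j = a ((j + n - i) mod n)" using ca that by blast
        moreover have "(j + n - i) mod n < n" using n1 by simp
        ultimately show ?thesis using anz l0m True M_def by (metis order_antisym)
      qed
      have y0: "y (Suc s) i = 0" if "i < n" for s i
      proof -
        have "y (Suc s) i = Max {A i j * y s j | j. j < n}" using ySuc that by (simp add: mvec_def)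
        also have "\<dots> = Max {0 * y s j | j. j < n}" by (rule Max_cong') (simp add: A0 that)
        also have "\<dots> = 0 * Max {y s j | j. j < n}" by (rule Max_scale[OF n1]) simp
        finally show ?thesis by simp
      qed
      have "n^2 = Suc (n^2 - 1)" using n1 by simp
      then show ?thesis using y0 by (metis mult_zero_right)
    next
      case False
      then have Mp: "0 < M" using M0 by simp
      have shift: "y (s + n) i = M^n * y s i" if "n^2 \<le> s" "i < n" for s i
      proof -
        have k: "n*(n-1) < s + n" using that n1 by (simp add: power2_eq_square algebra_simps)
        have "y (s+n) i = Max {M^n * (mpow n A s i j * x j) | j. j < n}"
          unfolding y_def mvec_def
          by (rule Max_cong') (simp add: core[OF n1 nn ca l0(1) l0m anz k \<open>i<n\<close>] M_def)
        also have "\<dots> = M^n * y s i" unfolding y_def mvec_def by (rule Max_scale[OF n1]) (simp add: M0)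
        finally show ?thesis .
      qed
      have shiftq: "y (s + q*n) i = M^(q*n) * y s i" if "n^2 \<le> s" "i < n" for s q i
      proof (induction q)
        case 0 then show ?case by simp
      next
        case (Suc q)
        have "y (s + Suc q * n) i = y ((s + q*n) + n) i" by (simp add: algebra_simps)
        also have "\<dots> = M^n * y (s + q*n) i" using shift that by simp
        also have "\<dots> = M^(Suc q * n) * y s i" using Suc by (simp add: power_add algebra_simps)
        finally show ?case .
      qed
      define T where "T = n^2 + t*n"
      have "t * 1 \<le> t * n" using n1 by (rule mult_le_mono2)
      then have "t \<le> T" unfolding T_def by linarith
      then have "T = t + (T - t)" by simp
      then have ET: "E T" using Eadd by metis
      show ?thesis
      proof (intro allI impI)
        fix i assume i: "i < n"
        have "M^(t*n) * y (Suc (n^2)) i = y (Suc T) i" using shiftq[of "Suc (n^2)" i t] i by (simp add: T_def)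
        also have "\<dots> = lam * y T i" using ET i by (simp add: E_def)
        also have "\<dots> = M^(t*n) * (lam * y (n^2) i)" using shiftq[of "n^2" i t] i by (simp add: T_def)
        finally show "lam * y (n^2) i = y (Suc (n^2)) i" using Mp by simp
      qed
    qed
    show "x \<in> {x \<in> nonneg_vecs n.
           \<forall>i<n. mlambda n A * mvec n (mpow n A (n^2)) x i = mvec n (mpow n A (n^2 + 1)) x i}"
      using goal xA by (auto simp: y_def lam_def Attr_def)
  next
    fix x assume "x \<in> {x \<in> nonneg_vecs n.
           \<forall>i<n. mlambda n A * mvec n (mpow n A (n^2)) x i = mvec n (mpow n A (n^2 + 1)) x i}"
    then have xn: "x \<in> nonneg_vecs n" and h: "\<forall>i<n. mlambda n A * mvec n (mpow n A (n^2)) x i = mvec n (mpow n A (Suc (n^2))) x i"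
      by auto
    have xn': "\<And>j. j < n \<Longrightarrow> 0 \<le> x j" using xn by (auto simp: nonneg_vecs_def)
    have "mvec n (mpow n A (n^2)) x \<in> eigencone n A (mlambda n A)"
      unfolding eigencone_def nonneg_vecs_def
      using h mvec_Suc[where x=x, OF nn xn'] Pnn xn' by (auto intro!: mvec_nonneg)
    then show "x \<in> Attr n A" using xn by (auto simp: Attr_def)
  qed
qed

end
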